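(* Let $(a_i)_{i\in\mathbb{Z}}$ and $(b_i)_{i\in\mathbb{Z}}$ be jointly stationary processes, with $a_i$ taking values in the positive integers and $b_i$ in a finite or countable alphabet, such that: (i) $(a_i)$ is i.i.d.; (ii) each $a_i$ is independent of the joint collection $\{a_j: j<i\}\cup\{b_j:j<i\}$; (iii) each $b_i$ is almost surely determined by $a_i,b_{i-1},b_{i-2},\dots,b_{i-a_i}$. Then the pair process $((a_i,b_i))_{i\in\mathbb{Z}}$ is a uniform martingale.
   Context: A stationary process $(X_i)_{i\in\mathbb{Z}}$ on a finite or countable alphabet is a uniform martingale if the conditional distribution of $X_0$ given $X_{-1},\dots,X_{-n}$ converges as $n\to\infty$ to the conditional distribution of $X_0$ given the entire past $X_{-1},X_{-2},\dots$ in total variation, uniformly over all pasts. *)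

theory Defs
  imports "HOL-Probability.Probability"
begin

definition gen_by :: "'w measure \<Rightarrow> (int \<Rightarrow> 'w \<Rightarrow> 'x) \<Rightarrow> int set \<Rightarrow> 'w measure" where
  "gen_by M X J = sigma (space M) {X j -` A \<inter> space M | j A. j \<in> J}"

definition stationary :: "'w measure \<Rightarrow> (int \<Rightarrow> 'w \<Rightarrow> 'x) \<Rightarrow> bool" where
  "stationary M X \<longleftrightarrow>
     (\<forall>k::int. distr M (PiM UNIV (\<lambda>_. count_space UNIV)) (\<lambda>\<omega> i. X (i + k) \<omega>)
             = distr M (PiM UNIV (\<lambda>_. count_space UNIV)) (\<lambda>\<omega> i. X i \<omega>))"

definition cond_prob_finite_past :: "'w measure \<Rightarrow> (int \<Rightarrow> 'w \<Rightarrow> 'x) \<Rightarrow> nat \<Rightarrow> 'x \<Rightarrow> 'w \<Rightarrow> real" where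
  "cond_prob_finite_past M X n x =
     real_cond_exp M (gen_by M X {- int n .. -1}) (indicator {\<omega>. X 0 \<omega> = x})"

definition cond_prob_past :: "'w measure \<Rightarrow> (int \<Rightarrow> 'w \<Rightarrow> 'x) \<Rightarrow> 'x \<Rightarrow> 'w \<Rightarrow> real" where
  "cond_prob_past M X x =
     real_cond_exp M (gen_by M X {.. -1}) (indicator {\<omega>. X 0 \<omega> = x})"

text \<open>Uniform martingale: a stationary process such that the total variation distance
  between the conditional law of X_0 given the last n values and the conditional law
  given the entire past tends to 0, uniformly over (almost) all pasts, i.e. its essential
  supremum is bounded by a null sequence.\<close>
definition uniform_martingale :: "'w measure \<Rightarrow> (int \<Rightarrow> 'w \<Rightarrow> 'x) \<Rightarrow> bool" where
  "uniform_martingale M X \<longleftrightarrow> stationary M X \<and>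
     (\<exists>\<epsilon> :: nat \<Rightarrow> real. \<epsilon> \<longlonglongrightarrow> 0 \<and>
        (\<forall>n. AE \<omega> in M.
           ennreal (1/2) * (\<integral>\<^sup>+ x. ennreal \<bar>cond_prob_finite_past M X n x \<omega> - cond_prob_past M X x \<omega>\<bar> \<partial>count_space UNIV)
             \<le> ennreal (\<epsilon> n)))"

end

theory Submission
  imports Defs
begin

lemma nn_count_le:
  fixes w :: "'x::countable \<Rightarrow> real"
  assumes w0: "\<And>x. w x \<ge> 0" and ws: "\<And>F. finite F \<Longrightarrow> sum w F \<le> q"
  shows "(\<integral>\<^sup>+x. ennreal (w x) \<partial>count_space UNIV) \<le> ennreal q"
proof -
  define h where "h m x = ennreal (w x) * indicator {x. to_nat x < m} x" for m x
  have inc: "incseq h"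
    unfolding incseq_def le_fun_def h_def
    by (auto intro!: mult_left_mono split: split_indicator)
  have eq: "(\<lambda>x. SUP m. h m x) = (\<lambda>x. ennreal (w x))"
  proof
    fix x
    show "(SUP m. h m x) = ennreal (w x)"
    proof (rule antisym)
      show "(SUP m. h m x) \<le> ennreal (w x)"
        by (rule SUP_least) (auto simp: h_def split: split_indicator)
      have "h (Suc (to_nat x)) x = ennreal (w x)" by (simp add: h_def)
      then show "ennreal (w x) \<le> (SUP m. h m x)" by (metis UNIV_I SUP_upper)
    qed
  qed
  have fin: "finite {x::'x. to_nat x < m}" for m
  proof -
    have "{x::'x. to_nat x < m} = to_nat -` {..<m}" by auto
    then show ?thesis using finite_vimageI[OF finite_lessThan[of m] inj_to_nat] by simp
  qed
  have "(\<integral>\<^sup>+x. ennreal (w x) \<partial>count_space UNIV) = (SUP m. \<integral>\<^sup>+x. h m x \<partial>count_space UNIV)"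
    by (subst eq[symmetric], rule nn_integral_monotone_convergence_SUP[OF inc]) auto
  also have "\<dots> \<le> ennreal q"
  proof (rule SUP_least)
    fix m
    have "(\<integral>\<^sup>+x. h m x \<partial>count_space UNIV) = (\<Sum>x\<in>{x. to_nat x < m}. h m x)"
      by (rule nn_integral_count_space'[OF fin]) (auto simp: h_def)
    also have "\<dots> = (\<Sum>x\<in>{x. to_nat x < m}. ennreal (w x))"
      by (rule sum.cong) (auto simp: h_def)
    also have "\<dots> = ennreal (\<Sum>x\<in>{x. to_nat x < m}. w x)"
      using w0 by (simp add: sum_ennreal)
    also have "\<dots> \<le> ennreal q" using ws[OF fin] by (simp add: ennreal_leI)
    finally show "(\<integral>\<^sup>+x. h m x \<partial>count_space UNIV) \<le> ennreal q" .
  qed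
  finally show ?thesis .
qed
lemma tv_bound:
  fixes u v :: "'x::countable \<Rightarrow> real"
  assumes u0: "\<forall>x. u x \<ge> 0" and v0: "\<forall>x. v x \<ge> 0" and eqn: "\<forall>x. \<not> P x \<longrightarrow> u x = v x"
    and us: "\<forall>F. finite F \<longrightarrow> (\<Sum>x\<in>{x\<in>F. P x}. u x) \<le> q"
    and vs: "\<forall>F. finite F \<longrightarrow> (\<Sum>x\<in>{x\<in>F. P x}. v x) \<le> q"
  shows "ennreal (1/2) * (\<integral>\<^sup>+x. ennreal \<bar>u x - v x\<bar> \<partial>count_space UNIV) \<le> ennreal q"
proof -
  define u' where "u' x = (if P x then u x else 0)" for x
  define v' where "v' x = (if P x then v x else 0)" for x
  have q0: "q \<ge> 0" using us[rule_format, of "{}"] by simp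
  have iu: "(\<integral>\<^sup>+x. ennreal (u' x) \<partial>count_space UNIV) \<le> ennreal q"
  proof (rule nn_count_le)
    show "0 \<le> u' x" for x using u0 by (simp add: u'_def)
    fix F :: "'x set" assume "finite F"
    then show "sum u' F \<le> q" using us[rule_format, of F] sum.inter_filter[of F u P] by (simp add: u'_def)
  qed
  have iv: "(\<integral>\<^sup>+x. ennreal (v' x) \<partial>count_space UNIV) \<le> ennreal q"
  proof (rule nn_count_le)
    show "0 \<le> v' x" for x using v0 by (simp add: v'_def)
    fix F :: "'x set" assume "finite F"
    then show "sum v' F \<le> q" using vs[rule_format, of F] sum.inter_filter[of F v P] by (simp add: v'_def)
  qed
  have "(\<integral>\<^sup>+x. ennreal \<bar>u x - v x\<bar> \<partial>count_space UNIV) \<le> (\<integral>\<^sup>+x. ennreal (u' x) + ennreal (v' x) \<partial>count_space UNIV)"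
  proof (rule nn_integral_mono)
    fix x
    have ux: "u x \<ge> 0" "v x \<ge> 0" using u0 v0 by auto
    have "\<bar>u x - v x\<bar> \<le> u' x + v' x" using ux eqn by (auto simp: u'_def v'_def abs_if)
    moreover have "u' x \<ge> 0" "v' x \<ge> 0" using u0 v0 by (auto simp: u'_def v'_def)
    ultimately show "ennreal \<bar>u x - v x\<bar> \<le> ennreal (u' x) + ennreal (v' x)"
      by (simp add: ennreal_plus[symmetric] ennreal_leI del: ennreal_plus)
  qed
  also have "\<dots> = (\<integral>\<^sup>+x. ennreal (u' x) \<partial>count_space UNIV) + (\<integral>\<^sup>+x. ennreal (v' x) \<partial>count_space UNIV)"
    by (rule nn_integral_add) auto
  also have "\<dots> \<le> ennreal q + ennreal q" using iu iv by (rule add_mono)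
  finally have "ennreal (1/2) * (\<integral>\<^sup>+x. ennreal \<bar>u x - v x\<bar> \<partial>count_space UNIV) \<le> ennreal (1/2) * (ennreal q + ennreal q)"
    by (rule mult_left_mono) simp
  also have "\<dots> = ennreal q"
  proof -
    have e1: "ennreal q + ennreal q = ennreal (2*q)" using q0 by (simp add: ennreal_plus[symmetric] del: ennreal_plus)
    have e2: "ennreal (1/2) * ennreal (2*q) = ennreal (1/2*(2*q))" by (rule ennreal_mult[symmetric]) (use q0 in auto)
    show ?thesis unfolding e1 e2 by simp
  qed
  finally show ?thesis .
qed


lemma sfs:
  assumes "prob_space M" "subalgebra M H"
  shows "sigma_finite_subalgebra M H"
proof -
  interpret prob_space M by fact
  show ?thesis
    by (rule finite_measure_subalgebra_is_sigma_finite)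
       (simp add: finite_measure_subalgebra_def finite_measure_subalgebra_axioms_def assms(2) finite_measure_axioms)
qed

lemma gen_by_gen_sub: "{X j -` A \<inter> space M | j A. j \<in> J} \<subseteq> Pow (space M)"
  by auto

lemma space_gen_by[simp]: "space (gen_by M X J) = space M"
  unfolding gen_by_def using gen_by_gen_sub by (simp add: space_measure_of_conv)

lemma sets_gen_by: "sets (gen_by M X J) = sigma_sets (space M) {X j -` A \<inter> space M | j A. j \<in> J}"
  unfolding gen_by_def by (rule sets_measure_of[OF gen_by_gen_sub])

lemma gen_by_sub:
  assumes "\<And>j. j \<in> J \<Longrightarrow> X j \<in> measurable M (count_space UNIV)"
  shows "subalgebra M (gen_by M X J)"
  unfolding subalgebra_def
proof
  show "space (gen_by M X J) = space M" by simp
  have "{X j -` A \<inter> space M | j A. j \<in> J} \<subseteq> sets M"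
    using assms measurable_sets by fastforce
  then show "sets (gen_by M X J) \<subseteq> sets M"
    unfolding sets_gen_by by (rule sets.sigma_sets_subset)
qed

lemma gen_by_meas:
  fixes X :: "int \<Rightarrow> 'a \<Rightarrow> 'x"
  assumes "j \<in> J"
  shows "X j \<in> measurable (gen_by M X J) (count_space UNIV)"
  unfolding measurable_def
proof safe
  fix A :: "'x set" assume "A \<in> sets (count_space UNIV)"
  then have "X j -` A \<inter> space M \<in> {X j -` A \<inter> space M | j A. j \<in> J}" using assms by blast
  then show "X j -` A \<inter> space (gen_by M X J) \<in> sets (gen_by M X J)"
    unfolding sets_gen_by by (auto intro: sigma_sets.Basic)
qed auto

lemma gen_by_mono:
  assumes "J \<subseteq> J'"
  shows "sets (gen_by M X J) \<subseteq> sets (gen_by M X J')"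
  unfolding sets_gen_by
  by (rule sigma_sets_mono) (use assms in blast)

lemma ce_indep:
  assumes ps: "prob_space M" and sub: "subalgebra M H"
    and ind: "prob_space.indep_set M EE PP" and Hsub: "sets H \<subseteq> PP"
    and E: "E \<in> EE" and S: "S \<in> sets H"
  shows "AE \<omega> in M. real_cond_exp M H (indicator (E \<inter> S)) \<omega> = measure M E * indicator S \<omega>"
proof -
  interpret prob_space M by fact
  interpret sigma_finite_subalgebra M H by (rule sfs[OF ps sub])
  have indp: "\<And>a b. a \<in> EE \<Longrightarrow> b \<in> PP \<Longrightarrow> prob (a \<inter> b) = prob a * prob b"
    and EEe: "EE \<subseteq> events"
    using ind unfolding indep_sets2_eq by auto
  have HM: "sets H \<subseteq> sets M" using sub unfolding subalgebra_def by auto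
  have EM: "E \<in> sets M" using E EEe by auto
  have SM: "S \<in> sets M" using S HM by auto
  have [measurable]: "S \<in> sets H" by fact
  show ?thesis
  proof (rule real_cond_exp_charact)
    fix A assume A: "A \<in> sets H"
    have AM: "A \<in> sets M" using A HM by auto
    have AS: "A \<inter> S \<in> PP" using A S Hsub by (meson sets.Int subsetD)
    have "(\<integral>x\<in>A. indicator (E \<inter> S) x \<partial>M) = (\<integral>x. indicator (E \<inter> (A \<inter> S)) x \<partial>M)"
      unfolding set_lebesgue_integral_def
      by (rule Bochner_Integration.integral_cong) (auto split: split_indicator)
    also have "\<dots> = prob (E \<inter> (A \<inter> S))"
      using EM AM SM by (simp add: Int_absorb2 sets.Int sets.sets_into_space)
    also have "\<dots> = prob E * prob (A \<inter> S)" using indp[OF E AS] .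
    also have "\<dots> = measure M E * (\<integral>x. indicator (A \<inter> S) x \<partial>M)"
      using AM SM by (simp add: Int_absorb2 sets.Int sets.sets_into_space)
    also have "\<dots> = (\<integral>x. measure M E * indicator (A \<inter> S) x \<partial>M)" by simp
    also have "\<dots> = (\<integral>x\<in>A. measure M E * indicator S x \<partial>M)"
      unfolding set_lebesgue_integral_def
      by (rule Bochner_Integration.integral_cong) (auto split: split_indicator)
    finally show "(\<integral>x\<in>A. indicator (E \<inter> S) x \<partial>M) = (\<integral>x\<in>A. measure M E * indicator S x \<partial>M)" .
  next
    show "integrable M (indicator (E \<inter> S) :: _ \<Rightarrow> real)"
      by (rule integrable_real_indicator) (auto simp: EM SM sets.Int emeasure_finite less_top[symmetric])
    show "integrable M (\<lambda>x. measure M E * indicator S x)"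
      by (intro integrable_mult_right integrable_real_indicator) (auto simp: SM emeasure_finite less_top[symmetric])
    show "(\<lambda>x. measure M E * indicator S x) \<in> borel_measurable H" by measurable
  qed
qed


lemma L_meas:
  fixes b :: "int \<Rightarrow> 'w \<Rightarrow> 'b::countable"
  assumes "\<And>j. 1 \<le> j \<Longrightarrow> j \<le> k \<Longrightarrow> b (- int j) \<in> measurable N (count_space UNIV)"
  shows "(\<lambda>\<omega>. map (\<lambda>j. b (- int j) \<omega>) [1..<Suc k]) \<in> measurable N (count_space UNIV)"
  using assms
proof (induction k)
  case 0
  then show ?case by simp
next
  case (Suc k)
  have IH: "(\<lambda>\<omega>. map (\<lambda>j. b (- int j) \<omega>) [1..<Suc k]) \<in> measurable N (count_space UNIV)"
    using Suc by auto
  have bm: "b (- int (Suc k)) \<in> measurable N (count_space UNIV)" using Suc.prems[of "Suc k"] by simp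
  have eq: "(\<lambda>\<omega>. map (\<lambda>j. b (- int j) \<omega>) [1..<Suc (Suc k)])
      = (\<lambda>\<omega>. (\<lambda>l \<omega>. l @ [b (- int (Suc k)) \<omega>]) (map (\<lambda>j. b (- int j) \<omega>) [1..<Suc k]) \<omega>)"
    by auto
  show ?case unfolding eq
  proof (rule measurable_compose_countable[OF _ IH])
    fix l :: "'b list"
    show "(\<lambda>\<omega>. l @ [b (- int (Suc k)) \<omega>]) \<in> measurable N (count_space UNIV)"
      using measurable_compose[OF bm, of "\<lambda>z. l @ [z]" "count_space UNIV"] by simp
  qed
qed

lemma pair_meas_cs:
  assumes "f \<in> measurable M (count_space UNIV)" "g \<in> measurable M (count_space UNIV)"
  shows "(\<lambda>\<omega>. (f \<omega> :: 'a::countable, g \<omega> :: 'b::countable)) \<in> measurable M (count_space UNIV)"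
proof -
  have "(\<lambda>\<omega>. (f \<omega>, g \<omega>)) \<in> measurable M (count_space UNIV \<Otimes>\<^sub>M count_space UNIV)"
    using assms by (rule measurable_Pair)
  also have "count_space UNIV \<Otimes>\<^sub>M count_space UNIV = count_space (UNIV :: ('a \<times> 'b) set)"
    by (simp add: pair_measure_countable)
  finally show ?thesis .
qed



theorem mainTheorem10:
  fixes M :: "'w measure"
    and a :: "int \<Rightarrow> 'w \<Rightarrow> nat"
    and b :: "int \<Rightarrow> 'w \<Rightarrow> 'b::countable"
  assumes "prob_space M"
    and a_meas: "\<And>i. a i \<in> measurable M (count_space UNIV)"
    and b_meas: "\<And>i. b i \<in> measurable M (count_space UNIV)"
    and a_pos: "\<And>i \<omega>. \<omega> \<in> space M \<Longrightarrow> a i \<omega> > 0"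
    and joint_stationary: "stationary M (\<lambda>i \<omega>. (a i \<omega>, b i \<omega>))"
    and a_indep: "prob_space.indep_vars M (\<lambda>_. count_space UNIV) a UNIV"
    and a_ident: "\<And>i. distr M (count_space UNIV) (a i) = distr M (count_space UNIV) (a 0)"
    and a_indep_past: "\<And>i. prob_space.indep_set M
          (sets (gen_by M a {i}))
          (sets (gen_by M (\<lambda>j \<omega>. (a j \<omega>, b j \<omega>)) {..<i}))"
    and b_determined: "\<And>i. \<exists>f :: nat \<Rightarrow> 'b list \<Rightarrow> 'b.
          AE \<omega> in M. b i \<omega> = f (a i \<omega>) (map (\<lambda>k. b (i - int k) \<omega>) [1..<Suc (a i \<omega>)])"
  shows "uniform_martingale M (\<lambda>i \<omega>. (a i \<omega>, b i \<omega>))"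
proof -
  interpret P: prob_space M by fact
  define X where "X = (\<lambda>i \<omega>. (a i \<omega>, b i \<omega>))"
  have Xmeas[measurable]: "X j \<in> measurable M (count_space UNIV)" for j
    unfolding X_def by (rule pair_meas_cs[OF a_meas b_meas])
  have am[measurable]: "a j \<in> measurable M (count_space UNIV)" for j by (rule a_meas)
  obtain f0 where f0: "AE \<omega> in M. b 0 \<omega> = f0 (a 0 \<omega>) (map (\<lambda>k. b (0 - int k) \<omega>) [1..<Suc (a 0 \<omega>)])"
    using b_determined[of 0] by blast
  define L where "L k \<omega> = map (\<lambda>j. b (- int j) \<omega>) [1..<Suc k]" for k \<omega>
  have f0': "AE \<omega> in M. b 0 \<omega> = f0 (a 0 \<omega>) (L (a 0 \<omega>) \<omega>)"
    using f0 by (simp add: L_def)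
  define S where "S k y = {\<omega> \<in> space M. f0 k (L k \<omega>) = y}" for k y
  define E where "E B = {\<omega>\<in>space M. a 0 \<omega> \<in> B}" for B
  define q where "q n = P.prob (E {n<..})" for n
  define Past where "Past = gen_by M X {..<0}"
  have indep: "P.indep_set (sets (gen_by M a {0})) (sets Past)"
    using a_indep_past[of 0] by (simp add: X_def Past_def)
  have Eg: "E B \<in> sets (gen_by M a {0})" for B
  proof -
    have "E B = a 0 -` B \<inter> space M" by (auto simp: E_def)
    then have "E B \<in> {a j -` A \<inter> space M | j A. j \<in> {0}}" by blast
    then show ?thesis unfolding sets_gen_by by (rule sigma_sets.Basic)
  qed
  have EMg: "E B \<in> sets M" for B
  proof -
    have "E B = a 0 -` B \<inter> space M" by (auto simp: E_def)
    then show ?thesis using measurable_sets[OF a_meas[of 0], of B] by simp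
  qed
  have indm[measurable]: "(indicator {\<omega>. X 0 \<omega> = x} :: 'w \<Rightarrow> real) \<in> borel_measurable M" for x
    by measurable
  have indi: "integrable M (indicator {\<omega>. X 0 \<omega> = x} :: 'w \<Rightarrow> real)" for x
    by (rule P.integrable_const_bound[where B=1]) (auto split: split_indicator)
  have K: "(\<forall>k y. {-int k..-1} \<subseteq> J \<longrightarrow> (AE \<omega> in M. real_cond_exp M (gen_by M X J) (indicator {\<omega>. X 0 \<omega> = (k,y)}) \<omega>
              = P.prob (E {k}) * indicator (S k y) \<omega>))
         \<and> (AE \<omega> in M. \<forall>x. real_cond_exp M (gen_by M X J) (indicator {\<omega>. X 0 \<omega> = x}) \<omega> \<ge> 0)
         \<and> (\<forall>T n. finite T \<longrightarrow> T \<subseteq> {x. n < fst x} \<longrightarrow>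
              (AE \<omega> in M. (\<Sum>x\<in>T. real_cond_exp M (gen_by M X J) (indicator {\<omega>. X 0 \<omega> = x}) \<omega>) \<le> q n))"
    if J0: "J \<subseteq> {..<0}" for J
  proof -
    define H where "H = gen_by M X J"
    have sub: "subalgebra M H" unfolding H_def by (rule gen_by_sub[OF Xmeas])
    interpret SF: sigma_finite_subalgebra M H by (rule sfs[OF assms(1) sub])
    have HP: "sets H \<subseteq> sets Past" unfolding H_def Past_def by (rule gen_by_mono[OF J0])
    have spH: "space M \<in> sets H" using sets.top[of H] by (simp add: H_def)
    have part1: "AE \<omega> in M. real_cond_exp M H (indicator {\<omega>. X 0 \<omega> = (k,y)}) \<omega>
              = P.prob (E {k}) * indicator (S k y) \<omega>" if kJ: "{-int k..-1} \<subseteq> J" for k y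
    proof -
      have bH: "b (- int j) \<in> measurable H (count_space UNIV)" if "1 \<le> j" "j \<le> k" for j
      proof -
        have "- int j \<in> J" using kJ that by auto
        then have "X (- int j) \<in> measurable H (count_space UNIV)" unfolding H_def by (rule gen_by_meas)
        then have "(\<lambda>\<omega>. snd (X (- int j) \<omega>)) \<in> measurable H (count_space UNIV)"
          by (rule measurable_compose) simp
        then show ?thesis by (simp add: X_def)
      qed
      have Lm: "L k \<in> measurable H (count_space UNIV)"
        unfolding L_def[abs_def] using L_meas[of k b H, OF bH] by simp
      have "(\<lambda>\<omega>. f0 k (L k \<omega>)) \<in> measurable H (count_space UNIV)"
        using measurable_compose[OF Lm, of "f0 k" "count_space UNIV"] by simp
      then have "(\<lambda>\<omega>. f0 k (L k \<omega>)) -` {y} \<inter> space H \<in> sets H"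
        by (rule measurable_sets) simp
      moreover have "(\<lambda>\<omega>. f0 k (L k \<omega>)) -` {y} \<inter> space H = S k y"
        by (auto simp: S_def H_def)
      ultimately have SH: "S k y \<in> sets H" by simp
      have c1: "AE \<omega> in M. real_cond_exp M H (indicator {\<omega>. X 0 \<omega> = (k,y)}) \<omega>
                 = real_cond_exp M H (indicator (E {k} \<inter> S k y)) \<omega>"
      proof (rule SF.real_cond_exp_cong)
        show "AE \<omega> in M. (indicator {\<omega>. X 0 \<omega> = (k,y)} :: 'w \<Rightarrow> real) \<omega> = indicator (E {k} \<inter> S k y) \<omega>"
          using f0' AE_space by eventually_elim (auto simp: X_def E_def S_def split: split_indicator)
        have "E {k} \<inter> S k y \<in> sets M"
          using Eg[of "{k}"] SH HP indep unfolding P.indep_sets2_eq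
          by (meson SF.subalg sets.Int subalgebra_def subsetD)
        then show "(indicator (E {k} \<inter> S k y) :: 'w \<Rightarrow> real) \<in> borel_measurable M" by measurable
      qed simp
      have c2: "AE \<omega> in M. real_cond_exp M H (indicator (E {k} \<inter> S k y)) \<omega> = P.prob (E {k}) * indicator (S k y) \<omega>"
        by (rule ce_indep[OF assms(1) sub indep HP Eg SH])
      show ?thesis using c1 c2 by eventually_elim simp
    qed
    have part2: "AE \<omega> in M. \<forall>x. real_cond_exp M H (indicator {\<omega>. X 0 \<omega> = x}) \<omega> \<ge> 0"
      unfolding AE_all_countable
      by (intro allI SF.real_cond_exp_pos) auto
    have part3: "AE \<omega> in M. (\<Sum>x\<in>T. real_cond_exp M H (indicator {\<omega>. X 0 \<omega> = x}) \<omega>) \<le> q n"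
      if T: "finite T" "T \<subseteq> {x. n < fst x}" for T n
    proof -
      have s1: "AE \<omega> in M. real_cond_exp M H (\<lambda>\<omega>. \<Sum>x\<in>T. indicator {\<omega>. X 0 \<omega> = x} \<omega>) \<omega>
               = (\<Sum>x\<in>T. real_cond_exp M H (indicator {\<omega>. X 0 \<omega> = x}) \<omega>)"
        by (rule SF.real_cond_exp_sum) (rule indi)
      have ptw: "(\<Sum>x\<in>T. (indicator {\<omega>. X 0 \<omega> = x} \<omega> :: real)) \<le> indicator (E {n<..}) \<omega>"
        if "\<omega> \<in> space M" for \<omega>
      proof -
        have "(\<Sum>x\<in>T. (indicator {\<omega>. X 0 \<omega> = x} \<omega> :: real)) = (\<Sum>x\<in>T. if X 0 \<omega> = x then 1 else 0)"
          by (simp add: indicator_def of_bool_def)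
        also have "\<dots> = (if X 0 \<omega> \<in> T then 1 else 0)"
          using T(1) by (simp add: sum.delta)
        also have "\<dots> \<le> indicator (E {n<..}) \<omega>"
          using T(2) that by (auto simp: E_def X_def split: split_indicator)
        finally show ?thesis .
      qed
      have EM: "E {n<..} \<in> sets M" using EMg .
      have s2: "AE \<omega> in M. real_cond_exp M H (\<lambda>\<omega>. \<Sum>x\<in>T. indicator {\<omega>. X 0 \<omega> = x} \<omega>) \<omega>
               \<le> real_cond_exp M H (indicator (E {n<..})) \<omega>"
        by (rule SF.real_cond_exp_mono) (use ptw EM indi in \<open>auto simp: P.emeasure_finite less_top[symmetric]\<close>)
      have s3: "AE \<omega> in M. real_cond_exp M H (indicator (E {n<..})) \<omega>
               = real_cond_exp M H (indicator (E {n<..} \<inter> space M)) \<omega>"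
        by (rule SF.real_cond_exp_cong) (use EM in \<open>auto simp: E_def\<close>)
      have s4: "AE \<omega> in M. real_cond_exp M H (indicator (E {n<..} \<inter> space M)) \<omega> = P.prob (E {n<..}) * indicator (space M) \<omega>"
        by (rule ce_indep[OF assms(1) sub indep HP Eg spH])
      show ?thesis using s1 s2 s3 s4 AE_space by eventually_elim (simp add: q_def)
    qed
    show ?thesis using part1 part2 part3 unfolding H_def by blast
  qed
  have qlim: "q \<longlonglongrightarrow> 0"
  proof -
    have "(\<lambda>n. P.prob (E {n<..})) \<longlonglongrightarrow> P.prob (\<Inter>n. E {n<..})"
    proof (rule P.finite_Lim_measure_decseq)
      show "range (\<lambda>n. E {n<..}) \<subseteq> P.events" using EMg by auto
      show "decseq (\<lambda>n. E {n<..})" unfolding decseq_def E_def by auto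
    qed
    moreover have "(\<Inter>n. E {n<..}) = {}" unfolding E_def by auto
    ultimately show ?thesis unfolding q_def[abs_def] by simp
  qed
  have main: "AE \<omega> in M. ennreal (1/2) * (\<integral>\<^sup>+ x. ennreal \<bar>cond_prob_finite_past M X n x \<omega> - cond_prob_past M X x \<omega>\<bar> \<partial>count_space UNIV)
             \<le> ennreal (q n)" for n
  proof -
    define cf where "cf x \<omega> = real_cond_exp M (gen_by M X {- int n .. -1}) (indicator {\<omega>. X 0 \<omega> = x}) \<omega>" for x \<omega>
    define cp where "cp x \<omega> = real_cond_exp M (gen_by M X {.. -1}) (indicator {\<omega>. X 0 \<omega> = x}) \<omega>" for x \<omega>
    have JF: "{- int n .. -1} \<subseteq> {..<0::int}" by auto
    have JG: "{.. -1} \<subseteq> {..<0::int}" by auto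
    note KF = K[OF JF, folded cf_def] and KG = K[OF JG, folded cp_def]
    have A1: "AE \<omega> in M. \<forall>x. \<not> n < fst x \<longrightarrow> cf x \<omega> = cp x \<omega>"
      unfolding AE_all_countable
    proof
      fix x :: "nat \<times> 'b"
      obtain k y where x: "x = (k, y)" by (cases x)
      show "AE \<omega> in M. \<not> n < fst x \<longrightarrow> cf x \<omega> = cp x \<omega>"
      proof (cases "k \<le> n")
        case True
        have "{- int k .. -1} \<subseteq> {- int n .. -1}" using True by auto
        then have e1: "AE \<omega> in M. cf (k,y) \<omega> = P.prob (E {k}) * indicator (S k y) \<omega>" using conjunct1[OF KF] by blast
        have "{- int k .. -1} \<subseteq> {.. -1::int}" by auto
        then have e2: "AE \<omega> in M. cp (k,y) \<omega> = P.prob (E {k}) * indicator (S k y) \<omega>" using conjunct1[OF KG] by blast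
        show ?thesis using e1 e2 unfolding x by eventually_elim simp
      next
        case False
        then show ?thesis unfolding x by simp
      qed
    qed
    have K3F: "AE \<omega> in M. (\<Sum>x\<in>T. cf x \<omega>) \<le> q n'" if "finite T" "T \<subseteq> {x. n' < fst x}" for T n'
      using conjunct2[OF conjunct2[OF KF]] that by blast
    have K3G: "AE \<omega> in M. (\<Sum>x\<in>T. cp x \<omega>) \<le> q n'" if "finite T" "T \<subseteq> {x. n' < fst x}" for T n'
      using conjunct2[OF conjunct2[OF KG]] that by blast
    have A2: "AE \<omega> in M. \<forall>T\<in>{T. finite T}. T \<subseteq> {x. n < fst x} \<longrightarrow> (\<Sum>x\<in>T. cf x \<omega>) \<le> q n"
    proof (rule AE_ball_countable'[OF _ countable_Collect_finite])
      fix T :: "(nat \<times> 'b) set" assume "T \<in> {T. finite T}"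
      then show "AE \<omega> in M. T \<subseteq> {x. n < fst x} \<longrightarrow> (\<Sum>x\<in>T. cf x \<omega>) \<le> q n"
        using K3F[of T n] by (cases "T \<subseteq> {x. n < fst x}") simp_all
    qed
    have A3: "AE \<omega> in M. \<forall>T\<in>{T. finite T}. T \<subseteq> {x. n < fst x} \<longrightarrow> (\<Sum>x\<in>T. cp x \<omega>) \<le> q n"
    proof (rule AE_ball_countable'[OF _ countable_Collect_finite])
      fix T :: "(nat \<times> 'b) set" assume "T \<in> {T. finite T}"
      then show "AE \<omega> in M. T \<subseteq> {x. n < fst x} \<longrightarrow> (\<Sum>x\<in>T. cp x \<omega>) \<le> q n"
        using K3G[of T n] by (cases "T \<subseteq> {x. n < fst x}") simp_all
    qed
    have A4: "AE \<omega> in M. \<forall>x. cf x \<omega> \<ge> 0" using conjunct1[OF conjunct2[OF KF]] .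
    have A5: "AE \<omega> in M. \<forall>x. cp x \<omega> \<ge> 0" using conjunct1[OF conjunct2[OF KG]] .
    have "AE \<omega> in M. ennreal (1/2) * (\<integral>\<^sup>+ x. ennreal \<bar>cf x \<omega> - cp x \<omega>\<bar> \<partial>count_space UNIV) \<le> ennreal (q n)"
      using A1 A2 A3 A4 A5
    proof eventually_elim
      case (elim \<omega>)
      have us: "\<forall>F. finite F \<longrightarrow> (\<Sum>x\<in>{x \<in> F. n < fst x}. cf x \<omega>) \<le> q n"
      proof (intro allI impI)
        fix F :: "(nat \<times> 'b) set" assume "finite F"
        then have "{x \<in> F. n < fst x} \<in> {T. finite T}" by simp
        moreover have "{x \<in> F. n < fst x} \<subseteq> {x. n < fst x}" by blast
        ultimately show "(\<Sum>x\<in>{x \<in> F. n < fst x}. cf x \<omega>) \<le> q n" using elim(2) by blast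
      qed
      have vs: "\<forall>F. finite F \<longrightarrow> (\<Sum>x\<in>{x \<in> F. n < fst x}. cp x \<omega>) \<le> q n"
      proof (intro allI impI)
        fix F :: "(nat \<times> 'b) set" assume "finite F"
        then have "{x \<in> F. n < fst x} \<in> {T. finite T}" by simp
        moreover have "{x \<in> F. n < fst x} \<subseteq> {x. n < fst x}" by blast
        ultimately show "(\<Sum>x\<in>{x \<in> F. n < fst x}. cp x \<omega>) \<le> q n" using elim(3) by blast
      qed
      show ?case
        by (rule tv_bound[where P="\<lambda>x. n < fst x", OF elim(4) elim(5) elim(1) us vs])
    qed
    then show ?thesis unfolding cond_prob_finite_past_def cond_prob_past_def cf_def cp_def .
  qed
  have st: "stationary M X" using joint_stationary by (simp add: X_def)
  have "uniform_martingale M X"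
    unfolding uniform_martingale_def
    by (intro conjI st exI[of _ q] qlim allI main)
  then show ?thesis by (simp add: X_def)
qed


end
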